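(* Let $n\ge2$, $\alpha\in(-n,0)$ and let $\phi$ be a Young function. For any domain $\Omega\subset\mathbb R^n$, we have $\mathbf B^{\alpha,\phi}(\Omega)\subset\dot{\mathbf B}^{\alpha,\phi}(\Omega)\subset L^1_{\mathrm{loc}}(\Omega)$ as sets.
   Context: A Young function is $\phi\in C([0,\infty))$, convex, with $\phi(0)=0$, $\phi(t)>0$ for $t>0$, $\lim_{t\to\infty}\phi(t)=\infty$. $\dot{\mathbf B}^{\alpha,\phi}(\Omega)$ is the space of measurable $u$ on $\Omega$ with finite $\|u\|_{\dot{\mathbf B}^{\alpha,\phi}(\Omega)}:=\inf\{\lambda>0:\int_\Omega\int_\Omega\phi(\frac{|u(x)-u(y)|}{\lambda|x-y|^{\alpha}})\frac{dx\,dy}{|x-y|^{2n}}\le1\}$. $L^\phi(\Omega)$ consists of measurable $u$ with $\|u\|_{L^\phi(\Omega)}:=\inf\{\lambda>0:\int_\Omega\phi(|u|/\lambda)\,dx\le1\}<\infty$, and $\mathbf B^{\alpha,\phi}(\Omega):=L^\phi(\Omega)\cap\dot{\mathbf B}^{\alpha,\phi}(\Omega)$. *)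

theory Defs
  imports "HOL-Analysis.Analysis"
begin

definition young_function :: "(real \<Rightarrow> real) \<Rightarrow> bool" where
  "young_function \<phi> \<longleftrightarrow>
     continuous_on {0..} \<phi> \<and> convex_on {0..} \<phi> \<and> \<phi> 0 = 0 \<and>
     (\<forall>t>0. \<phi> t > 0) \<and> filterlim \<phi> at_top at_top"

definition meas_on :: "'a::euclidean_space set \<Rightarrow> ('a \<Rightarrow> real) \<Rightarrow> bool" where
  "meas_on \<Omega> u \<longleftrightarrow> set_borel_measurable lebesgue \<Omega> u"

definition besov_modular ::
  "real \<Rightarrow> (real \<Rightarrow> real) \<Rightarrow> 'a::euclidean_space set \<Rightarrow> ('a \<Rightarrow> real) \<Rightarrow> real \<Rightarrow> ennreal" where
  "besov_modular \<alpha> \<phi> \<Omega> u t =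
     (\<integral>\<^sup>+ x\<in>\<Omega>. (\<integral>\<^sup>+ y\<in>\<Omega>.
        ennreal (\<phi> (\<bar>u x - u y\<bar> / (t * dist x y powr \<alpha>)) / dist x y ^ (2 * DIM('a)))
      \<partial>lebesgue) \<partial>lebesgue)"

text \<open>Homogeneous space: measurable u with finite Luxemburg-type norm, i.e. the set
  of admissible lambda > 0 is nonempty (its infimum is then finite).\<close>
definition Bdot :: "real \<Rightarrow> (real \<Rightarrow> real) \<Rightarrow> 'a::euclidean_space set \<Rightarrow> ('a \<Rightarrow> real) set" where
  "Bdot \<alpha> \<phi> \<Omega> = {u. meas_on \<Omega> u \<and> (\<exists>t>0. besov_modular \<alpha> \<phi> \<Omega> u t \<le> 1)}"

definition Orlicz :: "(real \<Rightarrow> real) \<Rightarrow> 'a::euclidean_space set \<Rightarrow> ('a \<Rightarrow> real) set" where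
  "Orlicz \<phi> \<Omega> = {u. meas_on \<Omega> u \<and>
     (\<exists>t>0. (\<integral>\<^sup>+ x\<in>\<Omega>. ennreal (\<phi> (\<bar>u x\<bar> / t)) \<partial>lebesgue) \<le> 1)}"

definition Besov :: "real \<Rightarrow> (real \<Rightarrow> real) \<Rightarrow> 'a::euclidean_space set \<Rightarrow> ('a \<Rightarrow> real) set" where
  "Besov \<alpha> \<phi> \<Omega> = Orlicz \<phi> \<Omega> \<inter> Bdot \<alpha> \<phi> \<Omega>"

definition L1_loc :: "'a::euclidean_space set \<Rightarrow> ('a \<Rightarrow> real) set" where
  "L1_loc \<Omega> = {u. meas_on \<Omega> u \<and> (\<forall>K. compact K \<and> K \<subseteq> \<Omega> \<longrightarrow> set_integrable lebesgue K u)}"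

end

theory Submission
  imports Defs
begin

lemma young_conv:
  assumes yf: "young_function \<phi>" and "0 \<le> a" "a \<le> b" "0 < b"
  shows "\<phi> a \<le> (a / b) * \<phi> b"
proof -
  have c: "convex_on {0..} \<phi>" and z: "\<phi> 0 = 0" using yf by (auto simp: young_function_def)
  have "\<phi> ((1 - a/b) *\<^sub>R 0 + (a/b) *\<^sub>R b) \<le> (1 - a/b) * \<phi> 0 + (a/b) * \<phi> b"
    using assms by (intro convex_onD[OF c]) auto
  then show ?thesis using assms z by simp
qed

lemma young_nonneg: "young_function \<phi> \<Longrightarrow> 0 \<le> s \<Longrightarrow> 0 \<le> \<phi> s"
  unfolding young_function_def by (cases "s = 0") (auto simp: less_imp_le)

lemma young_mono: assumes "young_function \<phi>" "0 \<le> a" "a \<le> b" shows "\<phi> a \<le> \<phi> b"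
proof (cases "b = 0")
  case True then show ?thesis using assms by simp
next
  case False
  then have "\<phi> a \<le> (a / b) * \<phi> b" using assms by (intro young_conv) auto
  also have "\<dots> \<le> \<phi> b" using assms False young_nonneg[OF assms(1), of b]
    by (intro mult_left_le_one_le) auto
  finally show ?thesis .
qed

lemma young_lin: assumes "young_function \<phi>" "0 \<le> s" shows "\<phi> 1 * (s - 1) \<le> \<phi> s"
proof (cases "s \<le> 1")
  case True
  have "0 \<le> \<phi> 1" using young_nonneg[OF assms(1)] by simp
  then have "\<phi> 1 * (s - 1) \<le> 0" using True by (simp add: mult_nonneg_nonpos)
  then show ?thesis using young_nonneg[OF assms] by linarith
next
  case False
  then have "\<phi> 1 \<le> (1 / s) * \<phi> s" using assms by (intro young_conv) auto
  then have "s * \<phi> 1 \<le> \<phi> s" using False by (simp add: field_simps)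
  moreover have "0 \<le> \<phi> 1" using young_nonneg[OF assms(1)] by simp
  ultimately show ?thesis by (simp add: algebra_simps)
qed

lemma young_one: "young_function \<phi> \<Longrightarrow> 0 < \<phi> 1"
  unfolding young_function_def by auto

lemma young_meas:
  assumes "young_function \<phi>"
  shows "(\<lambda>s. \<phi> (max 0 s)) \<in> borel_measurable borel"
proof -
  have "continuous_on {0..} \<phi>" using assms by (auto simp: young_function_def)
  then have "continuous_on UNIV (\<lambda>s. \<phi> (max 0 s))"
    by (rule continuous_on_compose2) (auto intro!: continuous_intros)
  then show ?thesis by (rule borel_measurable_continuous_onI)
qed

lemma two_good:
  fixes \<Omega> :: "'a::euclidean_space set" and F :: "'a \<Rightarrow> ennreal"
  assumes "open \<Omega>" "\<Omega> \<noteq> {}" "(\<integral>\<^sup>+ x\<in>\<Omega>. F x \<partial>lebesgue) < \<infinity>"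
  shows "\<exists>x0\<in>\<Omega>. \<exists>x1\<in>\<Omega>. x0 \<noteq> x1 \<and> F x0 < \<infinity> \<and> F x1 < \<infinity>"
proof (rule ccontr)
  assume H: "\<not> ?thesis"
  have "\<exists>p. \<forall>x\<in>\<Omega> - {p}. F x = \<infinity>"
  proof (cases "\<exists>x\<in>\<Omega>. F x < \<infinity>")
    case True
    then obtain p where "p \<in> \<Omega>" "F p < \<infinity>" by auto
    have "\<forall>x\<in>\<Omega> - {p}. F x = \<infinity>"
    proof
      fix x assume x: "x \<in> \<Omega> - {p}"
      show "F x = \<infinity>"
      proof (rule ccontr)
        assume "F x \<noteq> \<infinity>"
        then have "F x < \<infinity>" by (simp add: less_top)
        then show False using H x \<open>p \<in> \<Omega>\<close> \<open>F p < \<infinity>\<close> by blast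
      qed
    qed
    then show ?thesis by blast
  next
    case False then show ?thesis by (auto simp: top.not_eq_extremum)
  qed
  then obtain p where p: "\<forall>x\<in>\<Omega> - {p}. F x = \<infinity>" by blast
  have op: "open (\<Omega> - {p})" using assms(1) by auto
  have "\<Omega> - {p} \<noteq> {}"
  proof
    assume "\<Omega> - {p} = {}"
    then have "\<Omega> = {p}" using assms(2) by auto
    then show False using assms(1) not_open_singleton by metis
  qed
  then obtain q where q: "q \<in> \<Omega> - {p}" by auto
  then obtain e where e: "e > 0" "ball q e \<subseteq> \<Omega> - {p}" using op openE by metis
  have fin: "emeasure lborel (ball q e) \<noteq> top"
    using emeasure_bounded_finite[of "ball q e"] by simp
  have "0 < emeasure lborel (ball q e)"
    using content_ball_pos[OF e(1), of q] emeasure_eq_ennreal_measure[OF fin] by simp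
  also have "\<dots> = emeasure lebesgue (ball q e)" by simp
  also have "\<dots> \<le> emeasure lebesgue (\<Omega> - {p})"
    using e(2) op by (intro emeasure_mono) auto
  finally have pos: "emeasure lebesgue (\<Omega> - {p}) \<noteq> 0" by simp
  have "(\<integral>\<^sup>+ x. \<infinity> * indicator (\<Omega> - {p}) x \<partial>lebesgue) \<le> (\<integral>\<^sup>+ x\<in>\<Omega>. F x \<partial>lebesgue)"
    using p by (intro nn_integral_mono) (auto split: split_indicator)
  moreover have "(\<integral>\<^sup>+ x. \<infinity> * indicator (\<Omega> - {p}) x \<partial>lebesgue) = \<infinity>"
    using pos op by (simp add: nn_integral_cmult_indicator borel_open ennreal_mult_top)
  ultimately show False using assms(3) by (simp add: top_unique)
qed


lemma one_point:
  fixes u :: "'a::euclidean_space \<Rightarrow> real" and \<phi> :: "real \<Rightarrow> real"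
  assumes yf: "young_function \<phi>" and al: "\<alpha> < 0" and tp: "t > 0"
    and um: "(\<lambda>x. indicator \<Omega> x * u x) \<in> borel_measurable lebesgue"
    and Om: "\<Omega> \<in> sets lebesgue" and x0: "x0 \<in> \<Omega>"
    and fin: "(\<integral>\<^sup>+ y\<in>\<Omega>. ennreal (\<phi> (\<bar>u x0 - u y\<bar> / (t * dist x0 y powr \<alpha>)) / dist x0 y ^ (2 * DIM('a))) \<partial>lebesgue) < \<infinity>"
    and S: "S \<in> sets lebesgue" "S \<subseteq> \<Omega>" "emeasure lebesgue S < \<infinity>"
    and r: "r > 0" and D0: "D \<ge> 0" and SD: "\<forall>y\<in>S. r \<le> dist x0 y \<and> dist x0 y \<le> D"
  shows "(\<integral>\<^sup>+ y. ennreal (indicator S y * \<bar>u y\<bar>) \<partial>lebesgue) < \<infinity>"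
proof -
  define v where "v = (\<lambda>x. indicator \<Omega> x * u x)"
  define \<psi> where "\<psi> = (\<lambda>s. \<phi> (max 0 s))"
  have [measurable]: "\<psi> \<in> borel_measurable borel" unfolding \<psi>_def by (rule young_meas[OF yf])
  have [measurable]: "v \<in> borel_measurable lebesgue" unfolding v_def by (rule um)
  define g where "g = (\<lambda>y. \<psi> (\<bar>v x0 - v y\<bar> / (t * dist x0 y powr \<alpha>)) / dist x0 y ^ (2 * DIM('a)))"
  have "(\<lambda>y::'a. dist x0 y) \<in> borel_measurable borel"
    by (intro borel_measurable_continuous_onI continuous_intros)
  then have [measurable]: "(\<lambda>y::'a. dist x0 y) \<in> borel_measurable lebesgue"
    by (intro measurable_completion) simp
  have gm: "g \<in> borel_measurable lebesgue" unfolding g_def by measurable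
  have arg_nn: "0 \<le> \<bar>a\<bar> / (t * d powr \<alpha>)" for a d :: real using tp by simp
  have gnn: "0 \<le> g y" for y
    unfolding g_def \<psi>_def using young_nonneg[OF yf] by simp
  have geq: "g y = \<phi> (\<bar>u x0 - u y\<bar> / (t * dist x0 y powr \<alpha>)) / dist x0 y ^ (2 * DIM('a))"
    if "y \<in> \<Omega>" for y
    using that x0 arg_nn unfolding g_def \<psi>_def v_def by (simp add: max_absorb2)
  have fin2: "(\<integral>\<^sup>+ y. ennreal (g y) * indicator \<Omega> y \<partial>lebesgue) < \<infinity>"
  proof -
    have "(\<integral>\<^sup>+ y. ennreal (g y) * indicator \<Omega> y \<partial>lebesgue) =
      (\<integral>\<^sup>+ y\<in>\<Omega>. ennreal (\<phi> (\<bar>u x0 - u y\<bar> / (t * dist x0 y powr \<alpha>)) / dist x0 y ^ (2 * DIM('a))) \<partial>lebesgue)"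
      by (intro nn_integral_cong) (auto simp: geq split: split_indicator)
    then show ?thesis using fin by simp
  qed
  define c where "c = r powr (- \<alpha>) / t"
  have cp: "c > 0" unfolding c_def using r tp by simp
  define p1 where "p1 = \<phi> 1"
  have p1: "p1 > 0" unfolding p1_def by (rule young_one[OF yf])
  define N where "N = 2 * DIM('a)"
  define A where "A = \<bar>u x0\<bar> + 1 / c"
  define B where "B = D ^ N / (p1 * c)"
  have pt: "\<bar>u y\<bar> \<le> A + B * g y" if y: "y \<in> S" for y
  proof -
    define d where "d = dist x0 y"
    define w where "w = \<bar>u x0 - u y\<bar>"
    have dr: "r \<le> d" "d \<le> D" using SD y unfolding d_def by auto
    have dp: "d > 0" using dr r by simp
    have yO: "y \<in> \<Omega>" using y S by auto
    define a where "a = w / (t * d powr \<alpha>)"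
    have a_eq: "a = w * d powr (- \<alpha>) / t" unfolding a_def using dp
      by (simp add: powr_minus_divide)
    have "r powr (-\<alpha>) \<le> d powr (-\<alpha>)" using dr r al by (intro powr_mono2) auto
    then have "w * r powr (-\<alpha>) \<le> w * d powr (-\<alpha>)" by (intro mult_left_mono) (auto simp: w_def)
    then have "w * c \<le> a" unfolding a_eq c_def using tp
      by (simp add: divide_right_mono)
    then have "\<phi> (w * c) \<le> \<phi> a" using young_mono[OF yf] cp by (simp add: w_def)
    moreover have "p1 * (w * c - 1) \<le> \<phi> (w * c)" unfolding p1_def
      using young_lin[OF yf] cp by (simp add: w_def)
    ultimately have "p1 * (w * c - 1) \<le> \<phi> a" by linarith
    then have "w * c - 1 \<le> \<phi> a / p1" using pos_le_divide_eq[OF p1] by (simp add: mult.commute)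
    then have wc: "w * c \<le> 1 + \<phi> a / p1" by linarith
    have gy: "g y = \<phi> a / d ^ N" unfolding geq[OF yO] a_def w_def d_def N_def by simp
    have pa0: "0 \<le> \<phi> a" using young_nonneg[OF yf] a_def arg_nn w_def by simp
    have dN: "d ^ N \<le> D ^ N" using dp dr by (intro power_mono) auto
    have "0 \<le> \<phi> a / d ^ N" using pa0 dp by simp
    then have "d ^ N * (\<phi> a / d ^ N) \<le> D ^ N * (\<phi> a / d ^ N)" by (rule mult_right_mono[OF dN])
    moreover have "d ^ N * (\<phi> a / d ^ N) = \<phi> a" using dp by simp
    ultimately have "\<phi> a \<le> D ^ N * g y" unfolding gy by simp
    then have "\<phi> a / p1 \<le> D ^ N * g y / p1" using p1 by (intro divide_right_mono) auto
    then have "w * c \<le> 1 + D ^ N * g y / p1" using wc by linarith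
    then have "w \<le> (1 + D ^ N * g y / p1) / c" using pos_le_divide_eq[OF cp] by simp
    moreover have "(1 + D ^ N * g y / p1) / c = 1 / c + B * g y" unfolding B_def using cp p1
      by (simp add: add_divide_distrib)
    ultimately have "w \<le> 1 / c + B * g y" by simp
    moreover have "\<bar>u y\<bar> \<le> \<bar>u x0\<bar> + w" unfolding w_def by linarith
    ultimately show ?thesis unfolding A_def by linarith
  qed
  have B0: "B \<ge> 0" unfolding B_def using cp p1 SD r
    by (simp add: D0)
  have A0: "A \<ge> 0" unfolding A_def using cp by simp
  have "(\<integral>\<^sup>+ y. ennreal (indicator S y * \<bar>u y\<bar>) \<partial>lebesgue) \<le>
      (\<integral>\<^sup>+ y. ennreal A * indicator S y + ennreal B * (ennreal (g y) * indicator \<Omega> y) \<partial>lebesgue)"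
  proof (intro nn_integral_mono)
    fix y
    show "ennreal (indicator S y * \<bar>u y\<bar>) \<le> ennreal A * indicator S y + ennreal B * (ennreal (g y) * indicator \<Omega> y)"
    proof (cases "y \<in> S")
      case True
      then have "y \<in> \<Omega>" using S by auto
      then have "ennreal A * indicator S y + ennreal B * (ennreal (g y) * indicator \<Omega> y) = ennreal (A + B * g y)"
        using True A0 B0 gnn[of y] by (simp add: ennreal_plus ennreal_mult)
      then show ?thesis using True pt[OF True] by (simp add: ennreal_leI)
    qed simp
  qed
  also have "\<dots> = ennreal A * emeasure lebesgue S + ennreal B * (\<integral>\<^sup>+ y. ennreal (g y) * indicator \<Omega> y \<partial>lebesgue)"
    using S(1) Om gm by (subst nn_integral_add) (auto simp: nn_integral_cmult nn_integral_cmult_indicator)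
  also have "\<dots> < \<infinity>" using S(3) fin2
    by (simp add: ennreal_mult_less_top less_top)
  finally show ?thesis .
qed


theorem lemma2p2:
  fixes \<alpha> :: real and \<phi> :: "real \<Rightarrow> real" and \<Omega> :: "'a::euclidean_space set"
  assumes "DIM('a) \<ge> 2"
    and "- real DIM('a) < \<alpha>" and "\<alpha> < 0"
    and "young_function \<phi>"
    and "open \<Omega>" and "connected \<Omega>" and "\<Omega> \<noteq> {}"
  shows "Besov \<alpha> \<phi> \<Omega> \<subseteq> Bdot \<alpha> \<phi> \<Omega> \<and> Bdot \<alpha> \<phi> \<Omega> \<subseteq> L1_loc \<Omega>"
proof
  show "Besov \<alpha> \<phi> \<Omega> \<subseteq> Bdot \<alpha> \<phi> \<Omega>" unfolding Besov_def by blast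
  show "Bdot \<alpha> \<phi> \<Omega> \<subseteq> L1_loc \<Omega>"
  proof
    fix u assume "u \<in> Bdot \<alpha> \<phi> \<Omega>"
    then obtain t where tp: "t > 0" and md: "besov_modular \<alpha> \<phi> \<Omega> u t \<le> 1" and um: "meas_on \<Omega> u"
      unfolding Bdot_def by auto
    have um': "(\<lambda>x. indicator \<Omega> x * u x) \<in> borel_measurable lebesgue"
      using um unfolding meas_on_def set_borel_measurable_def by simp
    have Om: "\<Omega> \<in> sets lebesgue" using \<open>open \<Omega>\<close> by (simp add: borel_open)
    define F where "F = (\<lambda>x. \<integral>\<^sup>+ y\<in>\<Omega>. ennreal (\<phi> (\<bar>u x - u y\<bar> / (t * dist x y powr \<alpha>)) / dist x y ^ (2 * DIM('a))) \<partial>lebesgue)"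
    have "(\<integral>\<^sup>+ x\<in>\<Omega>. F x \<partial>lebesgue) < \<infinity>"
      using md unfolding besov_modular_def F_def by (simp add: le_less_trans)
    then obtain x0 x1 where x01: "x0 \<in> \<Omega>" "x1 \<in> \<Omega>" "x0 \<noteq> x1" "F x0 < \<infinity>" "F x1 < \<infinity>"
      using two_good[OF \<open>open \<Omega>\<close> \<open>\<Omega> \<noteq> {}\<close>] by blast
    show "u \<in> L1_loc \<Omega>" unfolding L1_loc_def
    proof (intro CollectI conjI allI impI)
      show "meas_on \<Omega> u" by fact
      fix K :: "'a set" assume K: "compact K \<and> K \<subseteq> \<Omega>"
      define r where "r = dist x0 x1 / 3"
      have rp: "r > 0" unfolding r_def using x01 by simp
      obtain b where b: "b > 0" "\<forall>x\<in>K. norm x \<le> b"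
        using K compact_imp_bounded bounded_pos by metis
      define D where "D = norm x0 + norm x1 + b"
      have D0: "D \<ge> 0" unfolding D_def using b by simp
      define S0 where "S0 = K - ball x0 r"
      define S1 where "S1 = K - ball x1 r"
      have Ks: "K \<in> sets lebesgue" using K by (simp add: borel_closed compact_imp_closed)
      have finK: "emeasure lebesgue K < \<infinity>"
      proof -
        have "K \<in> sets lborel" using K by (simp add: borel_closed compact_imp_closed)
        then show ?thesis using K emeasure_compact_finite[of K] by (simp add: emeasure_completion)
      qed
      have KS: "K \<subseteq> S0 \<union> S1"
      proof
        fix y assume y: "y \<in> K"
        show "y \<in> S0 \<union> S1"
        proof (rule ccontr)
          assume "y \<notin> S0 \<union> S1"
          then have "dist x0 y < r" "dist x1 y < r" using y unfolding S0_def S1_def by auto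
          then have "dist x0 x1 < 2 * r" using dist_triangle3[of x0 x1 y] by (simp add: dist_commute)
          then show False unfolding r_def using x01 by simp
        qed
      qed
      have Sp: "S \<in> sets lebesgue \<and> S \<subseteq> \<Omega> \<and> emeasure lebesgue S < \<infinity>
          \<and> (\<forall>y\<in>S. r \<le> dist z y \<and> dist z y \<le> D)"
        if "S = K - ball z r" "z = x0 \<or> z = x1" for S z
      proof (intro conjI)
        show "S \<in> sets lebesgue" using that Ks by auto
        show "S \<subseteq> \<Omega>" using that K by auto
        have "emeasure lebesgue S \<le> emeasure lebesgue K" using that Ks by (intro emeasure_mono) auto
        then show "emeasure lebesgue S < \<infinity>" using finK by (simp add: le_less_trans)
        show "\<forall>y\<in>S. r \<le> dist z y \<and> dist z y \<le> D"
        proof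
          fix y assume y: "y \<in> S"
          then have "y \<in> K" "\<not> dist z y < r" using that by auto
          moreover have "dist z y \<le> norm z + norm y" by (simp add: dist_norm norm_triangle_ineq4)
          moreover have "norm y \<le> b" using b \<open>y \<in> K\<close> by auto
          moreover have "norm x0 \<ge> 0" "norm x1 \<ge> 0" by auto
          ultimately show "r \<le> dist z y \<and> dist z y \<le> D" using that(2) unfolding D_def
            by (smt (verit))
        qed
      qed
      have I0: "(\<integral>\<^sup>+ y. ennreal (indicator S0 y * \<bar>u y\<bar>) \<partial>lebesgue) < \<infinity>"
        using Sp[OF S0_def] x01 rp D0
        by (intro one_point[OF \<open>young_function \<phi>\<close> \<open>\<alpha> < 0\<close> tp um' Om, of x0]) (auto simp: F_def)
      have I1: "(\<integral>\<^sup>+ y. ennreal (indicator S1 y * \<bar>u y\<bar>) \<partial>lebesgue) < \<infinity>"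
        using Sp[OF S1_def] x01 rp D0
        by (intro one_point[OF \<open>young_function \<phi>\<close> \<open>\<alpha> < 0\<close> tp um' Om, of x1]) (auto simp: F_def)
      have S0s: "S0 \<in> sets lebesgue" "S0 \<subseteq> \<Omega>" and S1s: "S1 \<in> sets lebesgue" "S1 \<subseteq> \<Omega>"
        using Sp[OF S0_def] Sp[OF S1_def] by auto
      have mS: "(\<lambda>y. ennreal (indicator S y * \<bar>u y\<bar>)) \<in> borel_measurable lebesgue"
        if "S \<in> sets lebesgue" "S \<subseteq> \<Omega>" for S
      proof -
        have "(\<lambda>y. ennreal (indicator S y * \<bar>indicator \<Omega> y * u y\<bar>)) \<in> borel_measurable lebesgue"
          using um' that(1) by measurable
        moreover have "(\<lambda>y. ennreal (indicator S y * \<bar>indicator \<Omega> y * u y\<bar>)) = (\<lambda>y. ennreal (indicator S y * \<bar>u y\<bar>))"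
          using that(2) by (auto simp: fun_eq_iff split: split_indicator)
        ultimately show ?thesis by simp
      qed
      show "set_integrable lebesgue K u"
        unfolding set_integrable_def
      proof (rule integrableI_bounded)
        have "(\<lambda>y. indicator K y * (indicator \<Omega> y * u y)) \<in> borel_measurable lebesgue"
          using um' Ks by measurable
        moreover have "(\<lambda>y. indicator K y * (indicator \<Omega> y * u y)) = (\<lambda>y. indicator K y *\<^sub>R u y)"
          using K by (auto simp: fun_eq_iff split: split_indicator)
        ultimately show "(\<lambda>y. indicator K y *\<^sub>R u y) \<in> borel_measurable lebesgue" by simp
        have "(\<integral>\<^sup>+ y. ennreal (norm (indicator K y *\<^sub>R u y)) \<partial>lebesgue) \<le>
            (\<integral>\<^sup>+ y. ennreal (indicator S0 y * \<bar>u y\<bar>) + ennreal (indicator S1 y * \<bar>u y\<bar>) \<partial>lebesgue)"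
        proof (intro nn_integral_mono)
          fix y
          show "ennreal (norm (indicator K y *\<^sub>R u y)) \<le> ennreal (indicator S0 y * \<bar>u y\<bar>) + ennreal (indicator S1 y * \<bar>u y\<bar>)"
          proof (cases "y \<in> K")
            case True
            then have "y \<in> S0 \<or> y \<in> S1" using KS by auto
            then show ?thesis using True
              by (auto simp: indicator_def)
          qed simp
        qed
        also have "\<dots> = (\<integral>\<^sup>+ y. ennreal (indicator S0 y * \<bar>u y\<bar>) \<partial>lebesgue) + (\<integral>\<^sup>+ y. ennreal (indicator S1 y * \<bar>u y\<bar>) \<partial>lebesgue)"
          by (rule nn_integral_add[OF mS[OF S0s] mS[OF S1s]])
        also have "\<dots> < \<infinity>" using I0 I1 by (simp add: less_top)
        finally show "(\<integral>\<^sup>+ y. ennreal (norm (indicator K y *\<^sub>R u y)) \<partial>lebesgue) < \<infinity>" .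
      qed
    qed
  qed
qed

end
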